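(* Let $r\geq 1$ and let $\mathcal{H}$ be a family of $r$-uniform (multi)hypergraphs. Then $\mathcal{E}^*_\mathcal{H}(k)=\infty$ for all sufficiently large $k$ if and only if $\mathcal{H}$ contains a sunflower. Furthermore, if $\mathcal{H}$ is a family of simple $r$-uniform hypergraphs, then $\mathcal{E}_\mathcal{H}(k)=\infty$ for all sufficiently large $k$ if and only if $\mathcal{H}$ contains a sunflower.
   Context: An $r$-uniform (multi)hypergraph $H$ is a sunflower if there is a set $S\subseteq V(H)$ (the core) such that every pair of distinct edges $e_1,e_2\in E(H)$ satisfies $e_1\cap e_2=S$. For an $r$-uniform (multi)hypergraph $G$ and family $\mathcal{H}$, $\operatorname{ex}(G,\mathcal{H})$ is the maximum number of edges (with multiplicity) of a sub-multihypergraph of $G$ containing no member of $\mathcal{H}$. $\mathcal{E}_\mathcal{H}(k):=\sup\{e(G): G\text{ simple } r\text{-uniform}, \operatorname{ex}(G,\mathcal{H})<k\}$ and $\mathcal{E}^*_\mathcal{H}(k):=\sup\{e(G): G\text{ an } r\text{-uniform multihypergraph}, \operatorname{ex}(G,\mathcal{H})<k\}$. *)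

theory Defs
  imports Main "HOL-Library.Multiset" "HOL-Library.Extended_Nat"
begin

type_synonym 'a hg = "'a set \<times> 'a set multiset"

definition uniform :: "nat \<Rightarrow> 'a hg \<Rightarrow> bool" where
  "uniform r G \<longleftrightarrow> finite (fst G) \<and> (\<forall>e\<in>#snd G. e \<subseteq> fst G \<and> card e = r)"

definition simple_hg :: "'a hg \<Rightarrow> bool" where
  "simple_hg G \<longleftrightarrow> (\<forall>e. count (snd G) e \<le> 1)"

text \<open>Sunflower: a core S such that any two distinct edges (distinct occurrences
  in the multiset) intersect exactly in S.\<close>
definition sunflower :: "'a hg \<Rightarrow> bool" where
  "sunflower H \<longleftrightarrow> (\<exists>S. S \<subseteq> fst H \<and>
      (\<forall>e1\<in>#snd H. \<forall>e2\<in>#snd H. e1 \<noteq> e2 \<longrightarrow> e1 \<inter> e2 = S) \<and>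
      (\<forall>e. count (snd H) e \<ge> 2 \<longrightarrow> e = S))"

definition contains_copy :: "'a hg \<Rightarrow> 'b hg \<Rightarrow> bool" where
  "contains_copy G F \<longleftrightarrow> (\<exists>f. inj_on f (fst F) \<and> f ` fst F \<subseteq> fst G \<and>
      image_mset ((`) f) (snd F) \<subseteq># snd G)"

definition ex_num :: "'a hg \<Rightarrow> 'b hg set \<Rightarrow> nat" where
  "ex_num G Hs = Sup {size E' | E'. E' \<subseteq># snd G \<and> \<not> (\<exists>F\<in>Hs. contains_copy (fst G, E') F)}"

definition E_star :: "nat \<Rightarrow> 'b hg set \<Rightarrow> nat \<Rightarrow> enat" where
  "E_star r Hs k = Sup {enat (size (snd G)) | G :: nat hg. uniform r G \<and> ex_num G Hs < k}"

definition E_simple :: "nat \<Rightarrow> 'b hg set \<Rightarrow> nat \<Rightarrow> enat" where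
  "E_simple r Hs k = Sup {enat (size (snd G)) | G :: nat hg.
      uniform r G \<and> simple_hg G \<and> ex_num G Hs < k}"

end

theory Submission
  imports Defs
begin

definition sfl :: "'a set set \<Rightarrow> bool" where
  "sfl D \<longleftrightarrow> (\<exists>S. \<forall>A\<in>D. \<forall>B\<in>D. A \<noteq> B \<longrightarrow> A \<inter> B = S)"

fun NB :: "nat \<Rightarrow> nat \<Rightarrow> nat" where
  "NB 0 k = 1"
| "NB (Suc r) k = k * (Suc r * NB r k)"

lemma greedy:
  assumes "finite F" "\<forall>A\<in>F. finite A \<and> card A = R" "R \<ge> 1"
    "\<forall>x. card {A\<in>F. x \<in> A} \<le> M" "card F > j * (R * M)"
  shows "\<exists>D\<subseteq>F. card D = Suc j \<and> (\<forall>A\<in>D. \<forall>B\<in>D. A \<noteq> B \<longrightarrow> A \<inter> B = {})"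
  using assms
proof (induction j arbitrary: F)
  case 0
  then obtain A where "A \<in> F" by fastforce
  then show ?case by (intro exI[of _ "{A}"]) auto
next
  case (Suc j)
  then obtain A where A: "A \<in> F" by fastforce
  define F' where "F' = {B\<in>F. A \<inter> B = {}}"
  have eq: "{B\<in>F. A \<inter> B \<noteq> {}} = (\<Union>x\<in>A. {B\<in>F. x \<in> B})" by blast
  have "card {B\<in>F. A \<inter> B \<noteq> {}} \<le> (\<Sum>x\<in>A. card {B\<in>F. x \<in> B})"
    unfolding eq by (rule card_UN_le) (use A Suc.prems in auto)
  also have "\<dots> \<le> card A * M" using sum_bounded_above[of A "\<lambda>x. card {B\<in>F. x \<in> B}" M] Suc.prems
    by auto
  also have "\<dots> = R * M" using A Suc.prems by auto
  finally have c1: "card {B\<in>F. A \<inter> B \<noteq> {}} \<le> R * M" .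
  have "F = F' \<union> {B\<in>F. A \<inter> B \<noteq> {}}" unfolding F'_def by blast
  hence "card F \<le> card F' + card {B\<in>F. A \<inter> B \<noteq> {}}" by (metis card_Un_le)
  hence cF': "card F' > j * (R * M)" using c1 Suc.prems(5) by simp
  have "\<forall>x. card {B\<in>F'. x \<in> B} \<le> M"
  proof
    fix x
    have "card {B\<in>F'. x \<in> B} \<le> card {B\<in>F. x \<in> B}"
      by (rule card_mono) (auto simp: F'_def Suc.prems)
    thus "card {B\<in>F'. x \<in> B} \<le> M" using Suc.prems(4) order_trans by blast
  qed
  moreover have "finite F'" using Suc.prems by (simp add: F'_def)
  moreover have "\<forall>A\<in>F'. finite A \<and> card A = R" using Suc.prems by (auto simp: F'_def)
  ultimately obtain D where D: "D \<subseteq> F'" "card D = Suc j" "\<forall>A\<in>D. \<forall>B\<in>D. A \<noteq> B \<longrightarrow> A \<inter> B = {}"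
    using Suc.IH[of F'] cF' Suc.prems(3) by blast
  have "A \<noteq> {}" using A Suc.prems by fastforce
  hence "A \<notin> D" using D(1) by (auto simp: F'_def)
  moreover have "finite D" using D(2) card.infinite by fastforce
  ultimately have "card (insert A D) = Suc (Suc j)" using D(2) by simp
  moreover have "insert A D \<subseteq> F" using A D(1) by (auto simp: F'_def)
  moreover have "\<forall>X\<in>insert A D. \<forall>Y\<in>insert A D. X \<noteq> Y \<longrightarrow> X \<inter> Y = {}"
    using D(1,3) by (auto simp: F'_def)
  ultimately show ?case by blast
qed

lemma sunflower_lemma:
  "finite F \<Longrightarrow> \<forall>A\<in>F. finite A \<and> card A = r \<Longrightarrow> card F > NB r k \<Longrightarrow>
   \<exists>D\<subseteq>F. card D \<ge> k \<and> sfl D"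
proof (induction r arbitrary: F)
  case 0
  hence "F \<subseteq> {{}}" by auto
  hence "card F \<le> card {{}::'a set}" by (intro card_mono) auto
  hence "card F \<le> 1" by simp
  with 0 show ?case by simp
next
  case (Suc r)
  show ?case
  proof (cases "\<exists>x. card {A\<in>F. x \<in> A} > NB r k")
    case True
    then obtain x where x: "card {A\<in>F. x \<in> A} > NB r k" by blast
    define Fx where "Fx = {A\<in>F. x \<in> A}"
    define G where "G = (\<lambda>A. A - {x}) ` Fx"
    have inj: "inj_on (\<lambda>A. A - {x}) Fx"
    proof (rule inj_onI)
      fix A B assume "A \<in> Fx" "B \<in> Fx" "A - {x} = B - {x}"
      hence "insert x (A - {x}) = insert x (B - {x})" "x \<in> A" "x \<in> B" by (auto simp: Fx_def)
      thus "A = B" by (simp add: insert_absorb)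
    qed
    have cG: "card G = card Fx" unfolding G_def using inj card_image by blast
    have fG: "finite G" using Suc.prems(1) by (simp add: G_def Fx_def)
    have sG: "\<forall>A\<in>G. finite A \<and> card A = r"
    proof
      fix A assume "A \<in> G"
      then obtain B where "B \<in> F" "x \<in> B" "A = B - {x}" by (auto simp: G_def Fx_def)
      thus "finite A \<and> card A = r" using Suc.prems(2) by auto
    qed
    have "card G > NB r k" using cG x by (simp add: Fx_def)
    then obtain D' where D': "D' \<subseteq> G" "card D' \<ge> k" "sfl D'"
      using Suc.IH[OF fG sG] by blast
    obtain S where S: "\<forall>A\<in>D'. \<forall>B\<in>D'. A \<noteq> B \<longrightarrow> A \<inter> B = S" using D'(3) unfolding sfl_def by blast
    have xn: "\<forall>A\<in>D'. x \<notin> A"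
    proof
      fix A assume "A \<in> D'"
      hence "A \<in> G" using D'(1) by blast
      thus "x \<notin> A" unfolding G_def by blast
    qed
    have injx: "inj_on (insert x) D'"
    proof (rule inj_onI)
      fix A B assume "A \<in> D'" "B \<in> D'" "insert x A = insert x B"
      thus "A = B" using xn by (metis Diff_insert_absorb)
    qed
    have "insert x ` D' \<subseteq> F"
    proof
      fix Y assume "Y \<in> insert x ` D'"
      then obtain A where "A \<in> D'" "Y = insert x A" by blast
      then obtain B where "B \<in> F" "x \<in> B" "A = B - {x}" using D'(1) by (auto simp: G_def Fx_def)
      thus "Y \<in> F" using \<open>Y = insert x A\<close> by (simp add: insert_absorb)
    qed
    moreover have "card (insert x ` D') \<ge> k" using D'(2) card_image injx by metis
    moreover have "sfl (insert x ` D')" unfolding sfl_def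
      by (rule exI[of _ "insert x S"]) (use S in blast)
    ultimately show ?thesis by blast
  next
    case False
    hence M: "\<forall>x. card {A\<in>F. x \<in> A} \<le> NB r k" by (simp add: not_less)
    have "card F > k * (Suc r * NB r k)" using Suc.prems by simp
    hence "\<exists>D\<subseteq>F. card D = Suc k \<and> (\<forall>A\<in>D. \<forall>B\<in>D. A \<noteq> B \<longrightarrow> A \<inter> B = {})"
      using greedy[OF Suc.prems(1,2) _ M, of k] by simp
    then obtain D where D: "D \<subseteq> F" "card D = Suc k" "\<forall>A\<in>D. \<forall>B\<in>D. A \<noteq> B \<longrightarrow> A \<inter> B = {}"
      by blast
    thus ?thesis unfolding sfl_def by (intro exI[of _ D]) auto
  qed
qed

lemma rep_sub: "replicate_mset n e \<subseteq># M \<longleftrightarrow> n \<le> count M e"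
  by (simp add: subseteq_mset_def)

lemma sub_sunflower:
  assumes H: "sunflower H" and C: "contains_copy H F" and U: "uniform r F"
  shows "sunflower F"
proof -
  obtain f where f: "inj_on f (fst F)" "f ` fst F \<subseteq> fst H"
     "image_mset ((`) f) (snd F) \<subseteq># snd H" using C unfolding contains_copy_def by (elim exE conjE)
  obtain S' where S': "S' \<subseteq> fst H"
    "\<forall>e1\<in>#snd H. \<forall>e2\<in>#snd H. e1 \<noteq> e2 \<longrightarrow> e1 \<inter> e2 = S'"
    "\<forall>e. count (snd H) e \<ge> 2 \<longrightarrow> e = S'" using H unfolding sunflower_def by (elim exE conjE)
  have sub: "\<forall>e\<in>#snd F. e \<subseteq> fst F" using U unfolding uniform_def by simp
  have inH: "f ` e \<in># snd H" if "e \<in># snd F" for e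
  proof -
    have "f ` e \<in># image_mset ((`) f) (snd F)" using that by simp
    thus ?thesis by (rule mset_subset_eqD[OF f(3)])
  qed
  define S where "S = {v\<in>fst F. f v \<in> S'}"
  have bk: "v \<in> e" if "e \<in># snd F" "v \<in> fst F" "f v \<in> f ` e" for e v
  proof -
    have "e \<subseteq> fst F" using sub that(1) by blast
    thus ?thesis using inj_on_image_mem_iff[OF f(1) that(2)] that(3) by blast
  qed
  have "\<forall>e1\<in>#snd F. \<forall>e2\<in>#snd F. e1 \<noteq> e2 \<longrightarrow> e1 \<inter> e2 = S"
  proof (intro ballI impI)
    fix e1 e2 assume e: "e1 \<in># snd F" "e2 \<in># snd F" "e1 \<noteq> e2"
    have "e1 \<subseteq> fst F" "e2 \<subseteq> fst F" using sub e by auto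
    hence "f ` e1 \<noteq> f ` e2" using inj_on_image_eq_iff[OF f(1)] e(3) by blast
    hence I: "f ` e1 \<inter> f ` e2 = S'" by (rule S'(2)[rule_format, OF inH[OF e(1)] inH[OF e(2)]])
    show "e1 \<inter> e2 = S"
    proof
      show "e1 \<inter> e2 \<subseteq> S" using I sub e(1) unfolding S_def by blast
      show "S \<subseteq> e1 \<inter> e2"
      proof
        fix v assume "v \<in> S"
        hence v: "v \<in> fst F" "f v \<in> f ` e1" "f v \<in> f ` e2" using I unfolding S_def by auto
        show "v \<in> e1 \<inter> e2" using bk[OF e(1) v(1,2)] bk[OF e(2) v(1,3)] by blast
      qed
    qed
  qed
  moreover have "\<forall>e. count (snd F) e \<ge> 2 \<longrightarrow> e = S"
  proof (intro allI impI)
    fix e assume "count (snd F) e \<ge> 2"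
    hence "replicate_mset 2 e \<subseteq># snd F" using rep_sub[of 2 e "snd F"] by simp
    hence "image_mset ((`) f) (replicate_mset 2 e) \<subseteq># snd H"
      by (rule subset_mset.order_trans[OF image_mset_subseteq_mono f(3)])
    hence "count (snd H) (f ` e) \<ge> 2" using rep_sub[of 2 "f ` e" "snd H"] by simp
    hence fe: "f ` e = S'" by (rule S'(3)[rule_format])
    have eF: "e \<in># snd F"
    proof (rule ccontr)
      assume "e \<notin># snd F" hence "count (snd F) e = 0" by (simp add: not_in_iff)
      thus False using \<open>count (snd F) e \<ge> 2\<close> by simp
    qed
    show "e = S"
    proof
      show "e \<subseteq> S" using fe sub eF unfolding S_def by blast
      show "S \<subseteq> e" using bk[OF eF] fe unfolding S_def by blast
    qed
  qed
  moreover have "S \<subseteq> fst F" unfolding S_def by blast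
  ultimately show ?thesis unfolding sunflower_def by blast
qed

lemma ex_num_ge:
  assumes "E' \<subseteq># snd G" "\<not> (\<exists>F\<in>Hs. contains_copy (fst G, E') F)"
  shows "size E' \<le> ex_num G Hs"
  unfolding ex_num_def
proof (rule cSup_upper)
  show "size E' \<in> {size E' |E'. E' \<subseteq># snd G \<and> \<not> (\<exists>F\<in>Hs. contains_copy (fst G, E') F)}"
    using assms by blast
  show "bdd_above {size E' |E'. E' \<subseteq># snd G \<and> \<not> (\<exists>F\<in>Hs. contains_copy (fst G, E') F)}"
    by (rule bdd_aboveI[of _ "size (snd G)"]) (auto intro: size_mset_mono)
qed

lemma big_sunflower:
  assumes U: "uniform r G" and k: "k \<ge> 2" and big: "size (snd G) > NB r k * k"
  shows "\<exists>E'. E' \<subseteq># snd G \<and> size E' \<ge> k \<and> sunflower (fst G, E')"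
proof (cases "\<exists>e. count (snd G) e \<ge> k")
  case True
  then obtain e where e: "count (snd G) e \<ge> k" by blast
  have eG: "e \<in># snd G"
  proof (rule ccontr)
    assume "e \<notin># snd G" hence "count (snd G) e = 0" by (simp add: not_in_iff)
    thus False using e k by simp
  qed
  have "e \<subseteq> fst G" using U eG unfolding uniform_def by simp
  have sf: "sunflower (fst G, replicate_mset k e)" unfolding sunflower_def
  proof (intro exI[of _ e] conjI)
    show "e \<subseteq> fst (fst G, replicate_mset k e)" using \<open>e \<subseteq> fst G\<close> by simp
    show "\<forall>e1\<in>#snd (fst G, replicate_mset k e). \<forall>e2\<in>#snd (fst G, replicate_mset k e). e1 \<noteq> e2 \<longrightarrow> e1 \<inter> e2 = e"
      by simp
    show "\<forall>e'. 2 \<le> count (snd (fst G, replicate_mset k e)) e' \<longrightarrow> e' = e"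
    proof (intro allI impI)
      fix e' assume "2 \<le> count (snd (fst G, replicate_mset k e)) e'"
      thus "e' = e" by (cases "e' = e") simp_all
    qed
  qed
  moreover have "replicate_mset k e \<subseteq># snd G" using e rep_sub[of k e "snd G"] by simp
  moreover have "size (replicate_mset k e) = k" by simp
  ultimately show ?thesis by (intro exI[of _ "replicate_mset k e"]) simp
next
  case False
  have lt: "\<forall>e. count (snd G) e \<le> k"
  proof
    fix e show "count (snd G) e \<le> k" using False by (simp add: not_le less_imp_le)
  qed
  have "size (snd G) = (\<Sum>e\<in>set_mset (snd G). count (snd G) e)"
    by (rule size_multiset_overloaded_eq)
  also have "\<dots> \<le> card (set_mset (snd G)) * k" using sum_bounded_above[of "set_mset (snd G)" "count (snd G)" k] lt by simp
  finally have "NB r k * k < card (set_mset (snd G)) * k" using big by linarith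
  hence cb: "card (set_mset (snd G)) > NB r k" by simp
  have ff: "\<forall>A\<in>set_mset (snd G). finite A \<and> card A = r"
  proof
    fix A assume "A \<in># snd G"
    hence "A \<subseteq> fst G" "card A = r" using U unfolding uniform_def by simp_all
    moreover have "finite (fst G)" using U unfolding uniform_def by simp
    ultimately show "finite A \<and> card A = r" using finite_subset by blast
  qed
  obtain D where D0: "D \<subseteq> set_mset (snd G)" "card D \<ge> k" "sfl D"
    using sunflower_lemma[OF finite_set_mset ff cb] by blast
  obtain S where S: "\<forall>A\<in>D. \<forall>B\<in>D. A \<noteq> B \<longrightarrow> A \<inter> B = S"
    using D0(3) unfolding sfl_def by (elim exE)
  have fD: "finite D" using D0(1) finite_subset by blast
  have c2: "card D \<ge> 2" using D0(2) k by linarith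
  hence "D \<noteq> {}" by auto
  then obtain A where A: "A \<in> D" by blast
  have "card (D - {A}) \<ge> 1" using A fD c2 by (simp add: card_Diff_singleton)
  hence "D - {A} \<noteq> {}" by (cases "D - {A} = {}") auto
  then obtain B where B: "B \<in> D" "B \<noteq> A" by blast
  have "S = A \<inter> B" using S A B by metis
  moreover have "A \<subseteq> fst G" using A D0(1) U unfolding uniform_def by auto
  ultimately have SG: "S \<subseteq> fst G" by blast
  have msub: "mset_set D \<subseteq># snd G"
    using subset_imp_msubset_mset_set[OF D0(1)] mset_set_set_mset_msubset subset_mset.order_trans by blast
  have c1: "\<forall>e. count (mset_set D) e \<le> 1"
  proof
    fix e show "count (mset_set D) e \<le> 1" by (cases "e \<in> D") (simp_all add: fD)
  qed
  have sf: "sunflower (fst G, mset_set D)" unfolding sunflower_def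
  proof (intro exI[of _ S] conjI)
    show "S \<subseteq> fst (fst G, mset_set D)" using SG by simp
    show "\<forall>e1\<in>#snd (fst G, mset_set D). \<forall>e2\<in>#snd (fst G, mset_set D). e1 \<noteq> e2 \<longrightarrow> e1 \<inter> e2 = S"
      using S fD by simp
    show "\<forall>e. 2 \<le> count (snd (fst G, mset_set D)) e \<longrightarrow> e = S"
    proof (intro allI impI)
      fix e assume "2 \<le> count (snd (fst G, mset_set D)) e"
      moreover have "count (mset_set D) e \<le> 1" using c1 by blast
      ultimately show "e = S" by simp
    qed
  qed
  have "size (mset_set D) \<ge> k" using D0(2) by simp
  with msub sf show ?thesis by blast
qed

lemma upper:
  assumes HU: "\<forall>F\<in>Hs. uniform r F" and NS: "\<not> (\<exists>F\<in>Hs. sunflower F)" and k: "k \<ge> 2"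
    and U: "uniform r G" and ex: "ex_num G Hs < k"
  shows "size (snd G) \<le> NB r k * k"
proof (rule ccontr)
  assume "\<not> ?thesis"
  then obtain E' where E': "E' \<subseteq># snd G" "size E' \<ge> k" "sunflower (fst G, E')"
    using big_sunflower[OF U k] by (meson not_le)
  have "\<not> (\<exists>F\<in>Hs. contains_copy (fst G, E') F)"
    using sub_sunflower[OF E'(3)] HU NS by blast
  hence "size E' \<le> ex_num G Hs" using ex_num_ge E'(1) by blast
  thus False using E'(2) ex by linarith
qed

lemma msub1: assumes "A \<subseteq># add_mset x M" shows "A - {#x#} \<subseteq># M"
  unfolding subseteq_mset_def
proof
  fix a have "count A a \<le> count (add_mset x M) a" using assms by (rule mset_subset_eq_count)
  thus "count (A - {#x#}) a \<le> count M a" by (cases "a = x") auto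
qed

lemma msub2: assumes "A \<subseteq># add_mset x M" "x \<notin># A" shows "A \<subseteq># M"
  unfolding subseteq_mset_def
proof
  fix a have "count A a \<le> count (add_mset x M) a" using assms(1) by (rule mset_subset_eq_count)
  moreover have "count A x = 0" using assms(2) by (simp add: not_in_iff)
  ultimately show "count A a \<le> count M a" by (cases "a = x") auto
qed

lemma sub_image_mset:
  "A \<subseteq># image_mset f B \<Longrightarrow> \<exists>B'. B' \<subseteq># B \<and> A = image_mset f B'"
proof (induction B arbitrary: A)
  case empty
  thus ?case by simp
next
  case (add b B)
  have P: "A \<subseteq># add_mset (f b) (image_mset f B)" using add.prems by simp
  show ?case
  proof (cases "f b \<in># A")
    case True
    have "A - {#f b#} \<subseteq># image_mset f B" by (rule msub1[OF P])
    then obtain B' where B': "B' \<subseteq># B" "A - {#f b#} = image_mset f B'" using add.IH by blast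
    hence "add_mset b B' \<subseteq># add_mset b B" by simp
    moreover have "A = image_mset f (add_mset b B')"
    proof -
      have "image_mset f (add_mset b B') = add_mset (f b) (A - {#f b#})" using B'(2) by simp
      also have "\<dots> = A" using True by (rule insert_DiffM)
      finally show ?thesis by simp
    qed
    ultimately
    show ?thesis by blast
  next
    case False
    have "A \<subseteq># image_mset f B" by (rule msub2[OF P False])
    then obtain B' where "B' \<subseteq># B" "A = image_mset f B'" using add.IH by blast
    moreover have "B \<subseteq># add_mset b B" by simp
    ultimately show ?thesis using subset_mset.order_trans by blast
  qed
qed

lemma div_lemma:
  fixes x y a b p :: nat
  assumes "x * p + a = y * p + b" "a < p" "b < p"
  shows "x = y \<and> a = b"
proof -
  have 1: "(x * p + a) div p = x" "(y * p + b) div p = y" using assms(2,3) by simp_all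
  have "x = (y * p + b) div p" using 1(1) unfolding assms(1) by simp
  hence "x = y" using 1(2) by simp
  thus ?thesis using assms(1) by simp
qed


definition Ed :: "nat \<Rightarrow> nat \<Rightarrow> nat \<Rightarrow> nat set" where
  "Ed c p j = {0..<c} \<union> {c + j * p ..< c + j * p + p}"

lemma copy:
  fixes es :: "'b set list" and T V :: "'b set"
  assumes fV: "finite V" and TV: "T \<subseteq> V"
    and E: "\<forall>i<length es. T \<subseteq> es!i \<and> es!i \<subseteq> V \<and> card (es!i) = r"
    and D: "\<forall>i<length es. \<forall>j<length es. i \<noteq> j \<longrightarrow> es!i \<inter> es!j \<subseteq> T"
    and c: "card T = c" and p: "p = r - c"
    and J: "finite J" "length es \<le> card J" "J \<subseteq> {..<m}"
    and L: "c + m * p + card V \<le> L"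
  shows "contains_copy ({..<L}, image_mset (Ed c p) (mset_set J)) (V, mset es)"
proof -
  define t where "t = length es"
  have "card {0..<t} \<le> card J" using J(2) t_def by simp
  then obtain \<sigma> where \<sigma>: "\<sigma> ` {0..<t} \<subseteq> J" "inj_on \<sigma> {0..<t}"
    using card_le_inj[of "{0..<t}" J] J(1) by auto
  have \<sigma>m: "\<sigma> i < m" if "i < t" for i
  proof -
    have "\<sigma> i \<in> J" using \<sigma>(1) that by auto
    thus ?thesis using J(3) by auto
  qed
  have fT: "finite T" using fV TV finite_subset by blast
  obtain \<phi> where \<phi>: "bij_betw \<phi> T {0..<c}" using ex_bij_betw_finite_nat[OF fT] c by auto
  have cp: "card (es!i - T) = p" if "i < t" for i
  proof -
    have "T \<subseteq> es!i" "es!i \<subseteq> V" "card (es!i) = r" using E that t_def by auto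
    moreover have "finite T" by (rule fT)
    ultimately show ?thesis using card_Diff_subset[of T "es!i"] c p by simp
  qed
  have exh: "\<forall>i\<in>{0..<t}. \<exists>h. bij_betw h (es!i - T) {0..<p}"
  proof
    fix i assume "i \<in> {0..<t}"
    hence it: "i < t" by simp
    have "es!i \<subseteq> V" using E it t_def by auto
    hence fin: "finite (es!i - T)" using fV finite_subset by blast
    have cc: "card (es!i - T) = p" using cp it by blast
    obtain h where "bij_betw h (es!i - T) {0..<card (es!i - T)}"
      using ex_bij_betw_finite_nat[OF fin] by (elim exE)
    thus "\<exists>h. bij_betw h (es!i - T) {0..<p}" unfolding cc by blast
  qed
  obtain \<psi> where \<psi>: "\<forall>i\<in>{0..<t}. bij_betw (\<psi> i) (es!i - T) {0..<p}"
    using bchoice[OF exh] by (elim exE)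
  obtain \<theta> where \<theta>: "bij_betw \<theta> V {0..<card V}" using ex_bij_betw_finite_nat[OF fV] by auto
  define idx where "idx v = (SOME i. i < t \<and> v \<in> es!i)" for v
  define f where "f v = (if v \<in> T then \<phi> v else if (\<exists>i<t. v \<in> es!i)
      then c + \<sigma> (idx v) * p + \<psi> (idx v) v else c + m * p + \<theta> v)" for v
  have idx: "idx v = i" if "i < t" "v \<in> es!i" "v \<notin> T" for i v
    unfolding idx_def
  proof (rule some_equality)
    show "i < t \<and> v \<in> es!i" using that by blast
    fix j assume "j < t \<and> v \<in> es!j"
    thus "j = i" using D that t_def by blast
  qed
  have fpet: "f v = c + \<sigma> i * p + \<psi> i v" if "i < t" "v \<in> es!i" "v \<notin> T" for i v
    using idx[OF that] that unfolding f_def by auto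
  have fT': "f v = \<phi> v" if "v \<in> T" for v using that unfolding f_def by simp
  have fR: "f v = c + m * p + \<theta> v" if "v \<notin> T" "\<not> (\<exists>i<t. v \<in> es!i)" for v
    using that unfolding f_def by (simp only: if_False)
  have \<phi>r: "\<phi> v < c" if "v \<in> T" for v using bij_betw_apply[OF \<phi> that] by simp
  have \<psi>r: "\<psi> i v < p" if "i < t" "v \<in> es!i" "v \<notin> T" for i v
  proof -
    have "bij_betw (\<psi> i) (es!i - T) {0..<p}" using \<psi> that(1) by simp
    from bij_betw_apply[OF this] show ?thesis using that by simp
  qed
  have \<theta>r: "\<theta> v < card V" if "v \<in> V" for v using bij_betw_apply[OF \<theta> that] by simp
  have pm: "\<sigma> i * p + p \<le> m * p" if "i < t" for i
  proof -
    have "Suc (\<sigma> i) \<le> m" using \<sigma>m[OF that] by simp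
    hence "Suc (\<sigma> i) * p \<le> m * p" by (rule mult_le_mono1)
    thus ?thesis by simp
  qed
  have cls: "v \<in> T \<or> (\<exists>i<t. v \<in> es!i \<and> v \<notin> T) \<or> (v \<notin> T \<and> \<not> (\<exists>i<t. v \<in> es!i))" for v
    by (cases "v \<in> T") auto
  have inj: "inj_on f V"
  proof (rule inj_onI)
    fix u v assume uV: "u \<in> V" and vV: "v \<in> V" and eq: "f u = f v"
    have lowT: "f w < c" if "w \<in> T" for w using fT'[OF that] \<phi>r[OF that] by simp
    have pet: "c \<le> f w \<and> f w < c + m * p" if "i < t" "w \<in> es!i" "w \<notin> T" for i w
      using fpet[OF that] \<psi>r[OF that] pm[OF that(1)] by simp
    have hi: "c + m * p \<le> f w" if "w \<notin> T" "\<not> (\<exists>i<t. w \<in> es!i)" for w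
      using fR[OF that] by simp
    have injphi: "inj_on \<phi> T" using \<phi> by (rule bij_betw_imp_inj_on)
    have injtheta: "inj_on \<theta> V" using \<theta> by (rule bij_betw_imp_inj_on)
    consider (T) "u \<in> T" | (P) i where "i < t" "u \<in> es!i" "u \<notin> T"
      | (R) "u \<notin> T" "\<not> (\<exists>i<t. u \<in> es!i)" using cls[of u] by blast
    then show "u = v"
    proof cases
      case T
      consider (T') "v \<in> T" | (P') j where "j < t" "v \<in> es!j" "v \<notin> T"
        | (R') "v \<notin> T" "\<not> (\<exists>i<t. v \<in> es!i)" using cls[of v] by blast
      then show ?thesis
      proof cases
        case T'
        hence "\<phi> u = \<phi> v" using eq fT'[OF T] fT'[OF T'] by simp
        thus ?thesis using inj_onD[OF injphi] T T' by blast
      next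
        case P' thus ?thesis using lowT[OF T] pet[OF P'] eq by simp
      next
        case R' thus ?thesis using lowT[OF T] hi[OF R'] eq by simp
      qed
    next
      case P
      consider (T') "v \<in> T" | (P') j where "j < t" "v \<in> es!j" "v \<notin> T"
        | (R') "v \<notin> T" "\<not> (\<exists>i<t. v \<in> es!i)" using cls[of v] by blast
      then show ?thesis
      proof cases
        case T'
        thus ?thesis using lowT[OF T'] pet[OF P] eq by simp
      next
        case P'
        have "\<sigma> i * p + \<psi> i u = \<sigma> j * p + \<psi> j v" using eq fpet[OF P] fpet[OF P'] by simp
        hence "\<sigma> i = \<sigma> j \<and> \<psi> i u = \<psi> j v" using div_lemma \<psi>r[OF P] \<psi>r[OF P'] by blast
        moreover have "i \<in> {0..<t}" "j \<in> {0..<t}" using P(1) P'(1) by auto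
        ultimately have ij1: "i = j" using inj_onD[OF \<sigma>(2)] by blast
        have ij: "i = j" "\<psi> i u = \<psi> i v" using ij1 \<open>\<sigma> i = \<sigma> j \<and> \<psi> i u = \<psi> j v\<close> by simp_all
        have "bij_betw (\<psi> i) (es!i - T) {0..<p}" using \<psi> P(1) by simp
        hence "inj_on (\<psi> i) (es!i - T)" by (rule bij_betw_imp_inj_on)
        moreover have "u \<in> es!i - T" "v \<in> es!i - T" using P P' ij(1) by auto
        ultimately show ?thesis using ij(2) inj_onD by metis
      next
        case R' thus ?thesis using pet[OF P] hi[OF R'] eq by simp
      qed
    next
      case R
      consider (T') "v \<in> T" | (P') j where "j < t" "v \<in> es!j" "v \<notin> T"
        | (R') "v \<notin> T" "\<not> (\<exists>i<t. v \<in> es!i)" using cls[of v] by blast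
      then show ?thesis
      proof cases
        case T'
        thus ?thesis using lowT[OF T'] hi[OF R] eq by simp
      next
        case P' thus ?thesis using pet[OF P'] hi[OF R] eq by simp
      next
        case R'
        hence "\<theta> u = \<theta> v" using eq fR[OF R] fR[OF R'] by simp
        thus ?thesis using inj_onD[OF injtheta] uV vV by blast
      qed
    qed
  qed
  have range: "f ` V \<subseteq> {..<L}"
  proof
    fix w assume "w \<in> f ` V"
    then obtain v where v: "v \<in> V" "w = f v" by blast
    consider (T) "v \<in> T" | (P) i where "i < t" "v \<in> es!i" "v \<notin> T"
      | (R) "v \<notin> T" "\<not> (\<exists>i<t. v \<in> es!i)" using cls[of v] by blast
    hence "f v < L"
    proof cases
      case T thus ?thesis using fT'[OF T] \<phi>r[OF T] L by simp
    next
      case P thus ?thesis using fpet[OF P] \<psi>r[OF P] pm[OF P(1)] L by simp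
    next
      case R thus ?thesis using fR[OF R] \<theta>r[OF v(1)] L by simp
    qed
    thus "w \<in> {..<L}" using v(2) by simp
  qed
  have img: "f ` (es!i) = Ed c p (\<sigma> i)" if i: "i < t" for i
  proof -
    have Ti: "T \<subseteq> es!i" using E i t_def by auto
    have "f ` T = \<phi> ` T" using fT' by auto
    also have "\<dots> = {0..<c}" using \<phi> by (simp add: bij_betw_def)
    finally have 1: "f ` T = {0..<c}" .
    have "f ` (es!i - T) = (\<lambda>a. a + (c + \<sigma> i * p)) ` (\<psi> i ` (es!i - T))"
      using fpet[OF i] by (auto simp: image_image add.commute)
    also have "\<psi> i ` (es!i - T) = {0..<p}" using \<psi> i by (simp add: bij_betw_def)
    also have "(\<lambda>a. a + (c + \<sigma> i * p)) ` {0..<p} = {c + \<sigma> i * p ..< c + \<sigma> i * p + p}"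
      by (simp add: image_add_atLeastLessThan' add.commute)
    finally have 2: "f ` (es!i - T) = {c + \<sigma> i * p ..< c + \<sigma> i * p + p}" .
    have "es!i = T \<union> (es!i - T)" using Ti by blast
    hence "f ` (es!i) = f ` T \<union> f ` (es!i - T)" by (metis image_Un)
    thus ?thesis using 1 2 unfolding Ed_def by simp
  qed
  have "image_mset ((`) f) (mset es) = mset (map ((`) f) es)" by simp
  also have "map ((`) f) es = map (\<lambda>i. Ed c p (\<sigma> i)) [0..<t]"
    by (rule nth_equalityI) (simp_all add: t_def img)
  also have "mset (map (\<lambda>i. Ed c p (\<sigma> i)) [0..<t]) = image_mset (Ed c p) (mset (map \<sigma> [0..<t]))"
    by (simp only: mset_map image_mset.compositionality comp_def)
  also have "mset (map \<sigma> [0..<t]) = mset_set (\<sigma> ` {0..<t})"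
  proof -
    have "distinct (map \<sigma> [0..<t])" using \<sigma>(2) by (simp add: distinct_map)
    hence "mset_set (set (map \<sigma> [0..<t])) = mset (map \<sigma> [0..<t])" by (rule mset_set_set)
    thus ?thesis by simp
  qed
  finally have "image_mset ((`) f) (mset es) = image_mset (Ed c p) (mset_set (\<sigma> ` {0..<t}))" .
  moreover have "mset_set (\<sigma> ` {0..<t}) \<subseteq># mset_set J"
    using subset_imp_msubset_mset_set[OF \<sigma>(1) J(1)] .
  ultimately have "image_mset ((`) f) (mset es) \<subseteq># image_mset (Ed c p) (mset_set J)"
    by (simp add: image_mset_subseteq_mono)
  thus ?thesis unfolding contains_copy_def using inj range by auto
qed

lemma cnt2:
  assumes "i < length xs" "j < length xs" "i \<noteq> j" "xs!i = xs!j"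
  shows "count (mset xs) (xs!i) \<ge> 2"
proof -
  have "count (mset xs) (xs!i) = length (replicate (count (mset xs) (xs!i)) (xs!i))" by simp
  also have "\<dots> = length (filter (\<lambda>y. xs!i = y) xs)" by (simp only: replicate_count_mset_eq_filter_eq)
  also have "\<dots> = card {k. k < length xs \<and> xs!i = xs!k}" by (rule length_filter_conv_card)
  finally have 1: "count (mset xs) (xs!i) = card {k. k < length xs \<and> xs!i = xs!k}" .
  have "{i, j} \<subseteq> {k. k < length xs \<and> xs!i = xs!k}" using assms by auto
  hence "card {i, j} \<le> card {k. k < length xs \<and> xs!i = xs!k}" by (intro card_mono) auto
  moreover have "card {i, j} = 2" using assms(3) by simp
  ultimately show ?thesis using 1 by simp
qed

lemma Ed_card:
  assumes "c \<le> r" "p = r - c"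
  shows "card (Ed c p j) = r"
proof -
  have "{0..<c} \<inter> {c + j * p ..< c + j * p + p} = {}" by auto
  hence "card (Ed c p j) = card {0..<c} + card {c + j * p ..< c + j * p + p}"
    unfolding Ed_def by (intro card_Un_disjoint) auto
  thus ?thesis using assms by simp
qed

lemma Ed_sub:
  assumes "j < m"
  shows "Ed c p j \<subseteq> {..<c + m * p + q}"
proof -
  have "Suc j \<le> m" using assms by simp
  hence "Suc j * p \<le> m * p" by (rule mult_le_mono1)
  thus ?thesis unfolding Ed_def by auto
qed

lemma Ed_inj:
  assumes "p > 0"
  shows "inj_on (Ed c p) A"
proof (rule inj_onI)
  fix j j' assume "j \<in> A" "j' \<in> A" and eq: "Ed c p j = Ed c p j'"
  have le: "j' \<le> j" if "Ed c p j = Ed c p j'" for j j'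
  proof -
    have "c + j * p \<in> Ed c p j" using assms unfolding Ed_def by simp
    hence "c + j * p \<in> Ed c p j'" using that by simp
    hence "c + j' * p \<le> c + j * p" unfolding Ed_def by auto
    hence "j' * p \<le> j * p" by simp
    thus ?thesis using assms by simp
  qed
  show "j = j'" using le[OF eq] le[OF eq[symmetric]] by simp
qed

lemma mset_set_sub:
  assumes "B \<subseteq># mset_set A" "finite A"
  shows "B = mset_set (set_mset B)"
proof (rule multiset_eqI)
  fix a
  have "count B a \<le> count (mset_set A) a" using assms(1) by (rule mset_subset_eq_count)
  moreover have "count (mset_set A) a \<le> 1" by (cases "a \<in> A") (simp_all add: assms(2))
  ultimately have le1: "count B a \<le> 1" by simp
  show "count B a = count (mset_set (set_mset B)) a"
  proof (cases "a \<in># B")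
    case True
    hence "count B a > 0" by simp
    hence "count B a = 1" using le1 by linarith
    thus ?thesis using True by simp
  next
    case False thus ?thesis by (simp add: not_in_iff)
  qed
qed

lemma lower:
  assumes r: "r \<ge> 1" and UF: "uniform r F" and SF: "sunflower F" and FH: "F \<in> Hs"
  shows "\<exists>k0. \<forall>k\<ge>k0. \<forall>n. \<exists>G::nat hg. uniform r G \<and> n \<le> size (snd G) \<and> ex_num G Hs < k
          \<and> (simple_hg F \<longrightarrow> simple_hg G)"
proof -
  obtain es where es: "mset es = snd F" using ex_mset by blast
  define t where "t = length es"
  define V where "V = fst F"
  have FF: "F = (V, mset es)" unfolding V_def es by simp
  have fV: "finite V" using UF unfolding uniform_def V_def by simp
  have esV: "es!i \<subseteq> V \<and> card (es!i) = r" if "i < t" for i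
  proof -
    have "es!i \<in># snd F" using that unfolding t_def es[symmetric] by simp
    thus ?thesis using UF unfolding uniform_def V_def by simp
  qed
  obtain S where S: "S \<subseteq> V" "\<forall>e1\<in>#snd F. \<forall>e2\<in>#snd F. e1 \<noteq> e2 \<longrightarrow> e1 \<inter> e2 = S"
    "\<forall>e. 2 \<le> count (snd F) e \<longrightarrow> e = S"
    using SF unfolding sunflower_def V_def by (elim exE conjE)
  have pw: "es!i \<inter> es!j = S" if "i < t" "j < t" "i \<noteq> j" for i j
  proof (cases "es!i = es!j")
    case True
    have "count (snd F) (es!i) \<ge> 2" using cnt2[of i es j] that True unfolding t_def es by simp
    hence "es!i = S" using S(3) by blast
    thus ?thesis using True by simp
  next
    case False
    have "es!i \<in># snd F" "es!j \<in># snd F" using that unfolding t_def es[symmetric] by simp_all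
    thus ?thesis using S(2) False by blast
  qed
  define T where "T = (if t \<ge> 2 then S else {})"
  have TV: "T \<subseteq> V" using S(1) unfolding T_def by simp
  have Tsub: "T \<subseteq> es!i" if "i < t" for i
  proof (cases "t \<ge> 2")
    case True
    define j :: nat where "j = (if i = 0 then 1 else 0)"
    have "j < t" "j \<noteq> i" using True unfolding j_def by auto
    hence "es!i \<inter> es!j = S" using pw that by blast
    thus ?thesis unfolding T_def using True by auto
  next
    case False thus ?thesis unfolding T_def by simp
  qed
  have E: "\<forall>i<length es. T \<subseteq> es!i \<and> es!i \<subseteq> V \<and> card (es!i) = r"
    using Tsub esV unfolding t_def by blast
  have D: "\<forall>i<length es. \<forall>j<length es. i \<noteq> j \<longrightarrow> es!i \<inter> es!j \<subseteq> T"
  proof (intro allI impI)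
    fix i j assume ij: "i < length es" "j < length es" "i \<noteq> j"
    hence "t \<ge> 2" unfolding t_def by linarith
    thus "es!i \<inter> es!j \<subseteq> T" using pw[of i j] ij unfolding T_def t_def by simp
  qed
  define c where "c = card T"
  have fT: "finite T" using TV fV finite_subset by blast
  have cr: "c \<le> r"
  proof (cases "t \<ge> 2")
    case True
    have "T \<subseteq> es!0" "es!0 \<subseteq> V" "card (es!0) = r" using Tsub esV True by auto
    moreover have "finite (es!0)" using \<open>es!0 \<subseteq> V\<close> fV finite_subset by blast
    ultimately show ?thesis unfolding c_def by (metis card_mono)
  next
    case False thus ?thesis unfolding c_def T_def by simp
  qed
  define p where "p = r - c"
  have simp_p: "p > 0" if "simple_hg F"
  proof (cases "t \<ge> 2")
    case False thus ?thesis unfolding p_def c_def T_def using r by simp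
  next
    case True
    show ?thesis
    proof (rule ccontr)
      assume "\<not> p > 0"
      hence cr': "card T = r" using cr unfolding p_def c_def by simp
      have eqT: "T = es!i" if "i < t" for i
      proof -
        have "T \<subseteq> es!i" "es!i \<subseteq> V" "card (es!i) = r" using Tsub esV that by auto
        moreover have "finite (es!i)" using \<open>es!i \<subseteq> V\<close> fV finite_subset by blast
        ultimately show ?thesis using cr' card_subset_eq by metis
      qed
      have "es!0 = es!1" using eqT[of 0] eqT[of 1] True by simp
      moreover have "0 < length es" "1 < length es" using True unfolding t_def by auto
      ultimately have "count (mset es) (es!0) \<ge> 2" using cnt2[of 0 es 1] by simp
      moreover have "count (mset es) (es!0) \<le> 1" using that unfolding simple_hg_def es by blast
      ultimately show False by simp
    qed
  qed
  show ?thesis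
  proof (intro exI[of _ "Suc t"] allI impI)
    fix k n :: nat assume k: "Suc t \<le> k"
    define m :: nat where "m = n"
    define L where "L = c + m * p + card V"
    define G :: "nat hg" where "G = ({..<L}, image_mset (Ed c p) (mset_set {0..<m}))"
    have UG: "uniform r G" unfolding uniform_def
    proof (intro conjI ballI)
      show "finite (fst G)" unfolding G_def by simp
      fix e assume "e \<in># snd G"
      then obtain j where j: "j < m" "e = Ed c p j" unfolding G_def by auto
      show "e \<subseteq> fst G" using Ed_sub[OF j(1), of c p "card V"] j(2) unfolding G_def L_def by simp
      show "card e = r" using Ed_card[OF cr p_def] j(2) by simp
    qed
    have sG: "n \<le> size (snd G)" unfolding G_def m_def by simp
    have simpG: "simple_hg G" if "simple_hg F"
    proof -
      have "inj_on (Ed c p) {0..<m}" using Ed_inj[OF simp_p[OF that]] by blast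
      hence "snd G = mset_set (Ed c p ` {0..<m})" unfolding G_def by (simp add: image_mset_mset_set)
      thus ?thesis unfolding simple_hg_def
        by (metis count_mset_set(1) count_mset_set(3) finite_atLeastLessThan finite_imageI le_refl zero_le)
    qed
    have bnd: "x \<le> t" if "x \<in> {size E' | E'. E' \<subseteq># snd G \<and> \<not> (\<exists>F\<in>Hs. contains_copy (fst G, E') F)}" for x
    proof (rule ccontr)
      assume "\<not> x \<le> t"
      from that obtain E' where E': "x = size E'" "E' \<subseteq># snd G" "\<not> (\<exists>F\<in>Hs. contains_copy (fst G, E') F)"
        by blast
      obtain B' where B': "B' \<subseteq># mset_set {0..<m}" "E' = image_mset (Ed c p) B'"
        using sub_image_mset[of E' "Ed c p" "mset_set {0..<m}"] E'(2) unfolding G_def by auto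
      define J where "J = set_mset B'"
      have BJ: "B' = mset_set J" unfolding J_def using mset_set_sub[OF B'(1)] by simp
      have fJ: "finite J" unfolding J_def by simp
      have "card J = size B'" using BJ by simp
      also have "\<dots> = x" using E'(1) B'(2) by simp
      finally have cJ: "length es \<le> card J" using \<open>\<not> x \<le> t\<close> unfolding t_def by simp
      have "set_mset B' \<subseteq> set_mset (mset_set {0..<m})" using B'(1) by (rule set_mset_mono)
      hence Jm: "J \<subseteq> {..<m}" unfolding J_def by auto
      have "contains_copy ({..<L}, image_mset (Ed c p) (mset_set J)) (V, mset es)"
        by (rule copy[OF fV TV E D c_def[symmetric] p_def fJ cJ Jm]) (simp add: L_def)
      hence "contains_copy (fst G, E') F" using FF B'(2) BJ unfolding G_def by simp
      thus False using E'(3) FH by blast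
    qed
    have "ex_num G Hs \<le> t"
      unfolding ex_num_def
    proof (cases "{size E' | E'. E' \<subseteq># snd G \<and> \<not> (\<exists>F\<in>Hs. contains_copy (fst G, E') F)} = {}")
      case True thus "Sup {size E' | E'. E' \<subseteq># snd G \<and> \<not> (\<exists>F\<in>Hs. contains_copy (fst G, E') F)} \<le> t"
        by (subst True) simp
    next
      case False
      show "Sup {size E' | E'. E' \<subseteq># snd G \<and> \<not> (\<exists>F\<in>Hs. contains_copy (fst G, E') F)} \<le> t"
        by (rule cSup_least[OF False]) (rule bnd)
    qed
    hence "ex_num G Hs < k" using k by simp
    thus "\<exists>G::nat hg. uniform r G \<and> n \<le> size (snd G) \<and> ex_num G Hs < k \<and> (simple_hg F \<longrightarrow> simple_hg G)"
      using UG sG simpG by blast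
  qed
qed

lemma supinf:
  fixes X :: "enat set"
  assumes "\<forall>n. \<exists>x\<in>X. enat n \<le> x"
  shows "Sup X = \<infinity>"
proof (rule ccontr)
  assume "Sup X \<noteq> \<infinity>"
  then obtain N where N: "Sup X = enat N" by (cases "Sup X") auto
  obtain x where x: "x \<in> X" "enat (Suc N) \<le> x" using assms by blast
  have "x \<le> Sup X" using x(1) by (rule Sup_upper)
  hence "enat (Suc N) \<le> Sup X" using x(2) by (rule order_trans[rotated])
  hence "enat (Suc N) \<le> enat N" using N by simp
  thus False by simp
qed

lemma E_star_bound:
  assumes HU: "\<forall>F\<in>Hs. uniform r F" and NS: "\<not> (\<exists>F\<in>Hs. sunflower F)" and k: "k \<ge> 2"
  shows "E_star r Hs k \<le> enat (NB r k * k)"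
  unfolding E_star_def
proof (rule Sup_least)
  fix x assume "x \<in> {enat (size (snd G)) |G :: nat hg. uniform r G \<and> ex_num G Hs < k}"
  then obtain G :: "nat hg" where G: "x = enat (size (snd G))" "uniform r G" "ex_num G Hs < k" by blast
  have "size (snd G) \<le> NB r k * k" by (rule upper[OF HU NS k G(2,3)])
  thus "x \<le> enat (NB r k * k)" using G(1) by simp
qed

lemma E_simple_bound:
  assumes HU: "\<forall>F\<in>Hs. uniform r F" and NS: "\<not> (\<exists>F\<in>Hs. sunflower F)" and k: "k \<ge> 2"
  shows "E_simple r Hs k \<le> enat (NB r k * k)"
  unfolding E_simple_def
proof (rule Sup_least)
  fix x assume "x \<in> {enat (size (snd G)) |G :: nat hg. uniform r G \<and> simple_hg G \<and> ex_num G Hs < k}"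
  then obtain G :: "nat hg" where G: "x = enat (size (snd G))" "uniform r G" "ex_num G Hs < k" by blast
  have "size (snd G) \<le> NB r k * k" by (rule upper[OF HU NS k G(2,3)])
  thus "x \<le> enat (NB r k * k)" using G(1) by simp
qed

theorem proposition2p2:
  fixes r :: nat and Hs :: "'b hg set"
  assumes "r \<ge> 1" and "\<forall>F\<in>Hs. uniform r F"
  shows "((\<exists>k0. \<forall>k\<ge>k0. E_star r Hs k = \<infinity>) \<longleftrightarrow> (\<exists>F\<in>Hs. sunflower F))
       \<and> ((\<forall>F\<in>Hs. simple_hg F) \<longrightarrow>
           ((\<exists>k0. \<forall>k\<ge>k0. E_simple r Hs k = \<infinity>) \<longleftrightarrow> (\<exists>F\<in>Hs. sunflower F)))"
proof (intro conjI impI iffI)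
  show "\<exists>F\<in>Hs. sunflower F" if H: "\<exists>k0. \<forall>k\<ge>k0. E_star r Hs k = \<infinity>"
  proof (rule ccontr)
    assume NS: "\<not> (\<exists>F\<in>Hs. sunflower F)"
    obtain k0 where k0: "\<forall>k\<ge>k0. E_star r Hs k = \<infinity>" using H by blast
    define k where "k = max k0 2"
    have "E_star r Hs k = \<infinity>" using k0 unfolding k_def by simp
    moreover have "E_star r Hs k \<le> enat (NB r k * k)"
      by (rule E_star_bound[OF assms(2) NS]) (simp add: k_def)
    ultimately show False by simp
  qed
  show "\<exists>k0. \<forall>k\<ge>k0. E_star r Hs k = \<infinity>" if H: "\<exists>F\<in>Hs. sunflower F"
  proof -
    obtain F where F: "F \<in> Hs" "sunflower F" using H by blast
    have UF: "uniform r F" using assms(2) F(1) by blast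
    obtain k0 where k0: "\<forall>k\<ge>k0. \<forall>n. \<exists>G::nat hg. uniform r G \<and> n \<le> size (snd G) \<and> ex_num G Hs < k
          \<and> (simple_hg F \<longrightarrow> simple_hg G)"
      using lower[OF assms(1) UF F(2) F(1)] by (elim exE)
    have "E_star r Hs k = \<infinity>" if kk: "k \<ge> k0" for k
      unfolding E_star_def
    proof (rule supinf, rule allI)
      fix n
      obtain G :: "nat hg" where G: "uniform r G" "n \<le> size (snd G)" "ex_num G Hs < k"
        using k0[rule_format, OF kk, of n] by (elim exE conjE)
      have "enat (size (snd G)) \<in> {enat (size (snd G)) |G :: nat hg. uniform r G \<and> ex_num G Hs < k}"
        using G by blast
      moreover have "enat n \<le> enat (size (snd G))" using G(2) by simp
      ultimately show "\<exists>x\<in>{enat (size (snd G)) |G :: nat hg. uniform r G \<and> ex_num G Hs < k}. enat n \<le> x"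
        by (rule bexI[rotated])
    qed
    thus ?thesis by blast
  qed
  show "\<exists>F\<in>Hs. sunflower F" if H: "\<exists>k0. \<forall>k\<ge>k0. E_simple r Hs k = \<infinity>"
  proof (rule ccontr)
    assume NS: "\<not> (\<exists>F\<in>Hs. sunflower F)"
    obtain k0 where k0: "\<forall>k\<ge>k0. E_simple r Hs k = \<infinity>" using H by blast
    define k where "k = max k0 2"
    have "E_simple r Hs k = \<infinity>" using k0 unfolding k_def by simp
    moreover have "E_simple r Hs k \<le> enat (NB r k * k)"
      by (rule E_simple_bound[OF assms(2) NS]) (simp add: k_def)
    ultimately show False by simp
  qed
  show "\<exists>k0. \<forall>k\<ge>k0. E_simple r Hs k = \<infinity>" if H: "\<exists>F\<in>Hs. sunflower F" and SH: "\<forall>F\<in>Hs. simple_hg F"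
  proof -
    obtain F where F: "F \<in> Hs" "sunflower F" using H by blast
    have UF: "uniform r F" using assms(2) F(1) by blast
    have sF: "simple_hg F" using SH F(1) by blast
    obtain k0 where k0: "\<forall>k\<ge>k0. \<forall>n. \<exists>G::nat hg. uniform r G \<and> n \<le> size (snd G) \<and> ex_num G Hs < k
          \<and> (simple_hg F \<longrightarrow> simple_hg G)"
      using lower[OF assms(1) UF F(2) F(1)] by (elim exE)
    have "E_simple r Hs k = \<infinity>" if kk: "k \<ge> k0" for k
      unfolding E_simple_def
    proof (rule supinf, rule allI)
      fix n
      obtain G :: "nat hg" where G: "uniform r G" "n \<le> size (snd G)" "ex_num G Hs < k"
          "simple_hg F \<longrightarrow> simple_hg G"
        using k0[rule_format, OF kk, of n] by (elim exE conjE)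
      have sG: "simple_hg G" using G(4) sF by blast
      have "enat (size (snd G)) \<in> {enat (size (snd G)) |G :: nat hg. uniform r G \<and> simple_hg G \<and> ex_num G Hs < k}"
        using G sG by blast
      moreover have "enat n \<le> enat (size (snd G))" using G(2) by simp
      ultimately show "\<exists>x\<in>{enat (size (snd G)) |G :: nat hg. uniform r G \<and> simple_hg G \<and> ex_num G Hs < k}. enat n \<le> x"
        by (rule bexI[rotated])
    qed
    thus ?thesis by blast
  qed
qed

end
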